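(* Fix $t_0>0$ and $c\ge 0$. Let $(\ell_n)$ be a sequence of min histories on $[t_0,\infty)$ with associated traces $A_n$ satisfying $\sup_n \bar A_n(q)<\infty$ for every $q\in(c,\infty)$, where $\bar A_n(q)=\int_0^\infty e^{-q\tau}A_n(d\tau)$. Then there is a min history $\ell$ such that $\ell_n(t)\to\ell(t)$ as $n\to\infty$ at all points of continuity $t$ of $\ell$ if and only if there is a trace $A$ associated to $\ell$ such that $\bar A_n(q)\to\bar A(q)$ as $n\to\infty$ for all $q\in(c,\infty)$.
   Context: A distribution function on an interval is a right-continuous nondecreasing real function, identified with the measure $A((x_1,x_2])=A(x_2)-A(x_1)$. A min history on $[t_0,\infty)$ is a positive distribution function $\ell$ on $[t_0,\infty)$ with $\ell(t)\to\infty$ as $t\to\infty$; its associated trace is $A(\tau)=\log\ell^\dagger(\tau)$ for $\tau>0$, where $\ell^\dagger(\tau)=\inf\{t\ge t_0:\ell(t)>\tau\}$. A trace is a distribution function $A$ on $(0,\infty)$ such that $A(\tau)=\log t_0$ on some nonempty maximal interval $(0,\tau_0)$ and $A(\tau)\to\infty$ as $\tau\to\infty$; its associated min history is $\ell(t)=\inf\{\tau>0:e^{A(\tau)}>t\}$. *)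

theory Defs
  imports "HOL-Analysis.Analysis"
begin

definition dist_fun_on :: "real set \<Rightarrow> (real \<Rightarrow> real) \<Rightarrow> bool" where
  "dist_fun_on I F \<longleftrightarrow> mono_on I F \<and> (\<forall>x\<in>I. continuous (at x within ({x..} \<inter> I)) F)"

definition min_history :: "real \<Rightarrow> (real \<Rightarrow> real) \<Rightarrow> bool" where
  "min_history t0 l \<longleftrightarrow> dist_fun_on {t0..} l \<and> (\<forall>t\<ge>t0. l t > 0) \<and> filterlim l at_top at_top"

definition l_dagger :: "real \<Rightarrow> (real \<Rightarrow> real) \<Rightarrow> real \<Rightarrow> real" where
  "l_dagger t0 l \<tau> = Inf {t. t \<ge> t0 \<and> l t > \<tau>}"

text \<open>The trace associated to a min history (meaningful for tau > 0).\<close>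
definition trace_of :: "real \<Rightarrow> (real \<Rightarrow> real) \<Rightarrow> real \<Rightarrow> real" where
  "trace_of t0 l \<tau> = ln (l_dagger t0 l \<tau>)"

definition is_trace :: "real \<Rightarrow> (real \<Rightarrow> real) \<Rightarrow> bool" where
  "is_trace t0 A \<longleftrightarrow> dist_fun_on {0<..} A \<and>
     (\<exists>\<tau>0>0. \<forall>\<tau>\<in>{0<..<\<tau>0}. A \<tau> = ln t0) \<and> filterlim A at_top at_top"

definition min_history_of :: "(real \<Rightarrow> real) \<Rightarrow> real \<Rightarrow> real" where
  "min_history_of A t = Inf {\<tau>. \<tau> > 0 \<and> exp (A \<tau>) > t}"

text \<open>Lebesgue--Stieltjes measure of a trace A with base value log t0, as a measure on the reals
  (A is extended by log t0 to (-infinity, 0], so the measure gives no mass to (-infinity,0]).\<close>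
definition trace_measure :: "real \<Rightarrow> (real \<Rightarrow> real) \<Rightarrow> real measure" where
  "trace_measure t0 A = interval_measure (\<lambda>\<tau>. if \<tau> \<le> 0 then ln t0 else A \<tau>)"

definition laplace_trace :: "real \<Rightarrow> (real \<Rightarrow> real) \<Rightarrow> real \<Rightarrow> ennreal" where
  "laplace_trace t0 A q = (\<integral>\<^sup>+ \<tau>\<in>{0<..}. ennreal (exp (- q * \<tau>)) \<partial>trace_measure t0 A)"

end

theory Submission
  imports Defs
begin



lemma mh_mono: assumes "min_history t0 l" "t0 \<le> s" "s \<le> t" shows "l s \<le> l t"
  using assms unfolding min_history_def dist_fun_on_def mono_on_def by auto

lemma mh_rc: assumes "min_history t0 l" "t0 \<le> t" "e > 0"
  shows "\<exists>d>0. \<forall>s. t \<le> s \<and> s < t + d \<longrightarrow> l s < l t + e"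
proof -
  have "continuous (at t within ({t..} \<inter> {t0..})) l"
    using assms unfolding min_history_def dist_fun_on_def by auto
  then obtain d where d: "d > 0" "\<forall>s\<in>{t..} \<inter> {t0..}. dist s t < d \<longrightarrow> dist (l s) (l t) < e"
    using assms(3) unfolding continuous_within_eps_delta by blast
  show ?thesis
  proof (intro exI[of _ d] conjI allI impI)
    fix s assume s: "t \<le> s \<and> s < t + d"
    then have "s \<in> {t..} \<inter> {t0..}" "dist s t < d" using assms(2) by (auto simp: dist_real_def)
    then have "dist (l s) (l t) < e" using d(2) by blast
    then show "l s < l t + e" by (simp add: dist_real_def)
  qed (use d in auto)
qed

lemma mh_S_ne: assumes "min_history t0 l" shows "\<exists>t\<ge>t0. l t > \<tau>"
proof -
  have "filterlim l at_top at_top" using assms unfolding min_history_def by auto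
  then have "eventually (\<lambda>t. l t > \<tau>) at_top" by (simp add: filterlim_at_top_dense)
  then obtain N where "\<forall>t\<ge>N. l t > \<tau>" by (auto simp: eventually_at_top_linorder)
  then show ?thesis by (intro exI[of _ "max N t0"]) auto
qed

lemma ld_ge: assumes "min_history t0 l" shows "t0 \<le> l_dagger t0 l \<tau>"
  unfolding l_dagger_def using mh_S_ne[OF assms, of \<tau>]
  by (intro cInf_greatest) auto

lemma ld_D1: assumes "min_history t0 l" "t0 \<le> t" "l t > \<tau>" shows "l_dagger t0 l \<tau> \<le> t"
  unfolding l_dagger_def using assms by (intro cInf_lower) (auto intro: bdd_belowI[of _ t0])

lemma ld_D2: assumes "min_history t0 l" "l_dagger t0 l \<tau> < t" shows "l t > \<tau>"
proof -
  obtain s where s: "s \<ge> t0" "l s > \<tau>" "s < t"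
    using assms(2) mh_S_ne[OF assms(1), of \<tau>] unfolding l_dagger_def
    by (subst (asm) cInf_less_iff) (auto intro: bdd_belowI[of _ t0])
  then show ?thesis using mh_mono[OF assms(1), of s t] by auto
qed

lemma ld_D3: assumes "min_history t0 l" "t0 \<le> t" "l t \<le> \<tau>" shows "t \<le> l_dagger t0 l \<tau>"
proof -
  have "\<And>s. s \<ge> t0 \<Longrightarrow> l s > \<tau> \<Longrightarrow> t \<le> s"
    using mh_mono[OF assms(1), of _ t] assms by force
  then show ?thesis unfolding l_dagger_def using mh_S_ne[OF assms(1), of \<tau>]
    by (intro cInf_greatest) auto
qed

lemma ld_mono: assumes "min_history t0 l" "\<tau> \<le> \<tau>'" shows "l_dagger t0 l \<tau> \<le> l_dagger t0 l \<tau>'"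
  unfolding l_dagger_def using mh_S_ne[OF assms(1), of \<tau>'] assms(2)
  by (intro cInf_superset_mono) (auto intro: bdd_belowI[of _ t0])

lemma ld_small: assumes "min_history t0 l" "\<tau> < l t0" shows "l_dagger t0 l \<tau> = t0"
  using ld_D1[OF assms(1) order_refl assms(2)] ld_ge[OF assms(1), of \<tau>] by linarith

lemma ld_rc: assumes "min_history t0 l" "e > 0"
  shows "\<exists>d>0. \<forall>\<tau>'. \<tau> \<le> \<tau>' \<and> \<tau>' < \<tau> + d \<longrightarrow> l_dagger t0 l \<tau>' < l_dagger t0 l \<tau> + e"
proof -
  have "l_dagger t0 l \<tau> < l_dagger t0 l \<tau> + e" using assms by simp
  then obtain t where t: "l t > \<tau>" "t < l_dagger t0 l \<tau> + e" "t \<ge> t0"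
    using mh_S_ne[OF assms(1), of \<tau>] unfolding l_dagger_def
    by (subst (asm) cInf_less_iff) (auto intro: bdd_belowI[of _ t0])
  show ?thesis
  proof (intro exI[of _ "l t - \<tau>"] conjI allI impI)
    fix \<tau>' assume "\<tau> \<le> \<tau>' \<and> \<tau>' < \<tau> + (l t - \<tau>)"
    then have "l_dagger t0 l \<tau>' \<le> t" using ld_D1[OF assms(1) t(3)] by auto
    then show "l_dagger t0 l \<tau>' < l_dagger t0 l \<tau> + e" using t by auto
  qed (use t in auto)
qed

lemma ld_tendsto: assumes "min_history t0 l" shows "filterlim (l_dagger t0 l) at_top at_top"
  unfolding filterlim_at_top eventually_at_top_linorder
proof (intro allI)
  fix Z :: real
  show "\<exists>N. \<forall>n\<ge>N. Z \<le> l_dagger t0 l n"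
    using ld_D3[OF assms, of "max Z t0"] by (intro exI[of _ "l (max Z t0)"]) auto
qed

lemma mh_pos: "min_history t0 l \<Longrightarrow> t0 \<le> t \<Longrightarrow> l t > 0"
  unfolding min_history_def by auto

lemma trace_of_is_trace: assumes "min_history t0 l" "t0 > 0" shows "is_trace t0 (trace_of t0 l)"
  unfolding is_trace_def
proof (intro conjI)
  have pos: "\<And>\<tau>. l_dagger t0 l \<tau> > 0" using ld_ge[OF assms(1)] assms(2) by (meson less_le_trans)
  show "dist_fun_on {0<..} (trace_of t0 l)"
    unfolding dist_fun_on_def
  proof (intro conjI ballI)
    show "mono_on {0<..} (trace_of t0 l)"
      unfolding trace_of_def by (intro mono_onI) (use pos ld_mono[OF assms(1)] in auto)
    fix x :: real assume "x \<in> {0<..}"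
    have "continuous (at x within ({x..} \<inter> {0<..})) (l_dagger t0 l)"
      unfolding continuous_within_eps_delta
    proof (intro allI impI)
      fix e :: real assume "e > 0"
      obtain d where "d > 0" "\<forall>\<tau>'. x \<le> \<tau>' \<and> \<tau>' < x + d \<longrightarrow> l_dagger t0 l \<tau>' < l_dagger t0 l x + e"
        using ld_rc[OF assms(1) \<open>e>0\<close>] by blast
      note dd = this
      show "\<exists>d>0. \<forall>x'\<in>{x..} \<inter> {0<..}. dist x' x < d \<longrightarrow> dist (l_dagger t0 l x') (l_dagger t0 l x) < e"
      proof (intro exI[of _ d] conjI ballI impI)
        fix x' assume x': "x' \<in> {x..} \<inter> {0<..}" "dist x' x < d"
        then have "x \<le> x'" "x' < x + d" by (auto simp: dist_real_def)
        then have "l_dagger t0 l x' < l_dagger t0 l x + e" "l_dagger t0 l x \<le> l_dagger t0 l x'"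
          using dd(2) ld_mono[OF assms(1)] by auto
        then show "dist (l_dagger t0 l x') (l_dagger t0 l x) < e" by (simp add: dist_real_def)
      qed (use dd in auto)
    qed
    moreover have "isCont ln (l_dagger t0 l x)" using pos[of x] by (rule isCont_ln_pos)
    ultimately have "continuous (at x within ({x..} \<inter> {0<..})) (\<lambda>\<tau>. ln (l_dagger t0 l \<tau>))"
      by (intro continuous_within_compose3[where g=ln and f="l_dagger t0 l"])
    then show "continuous (at x within ({x..} \<inter> {0<..})) (trace_of t0 l)"
      unfolding trace_of_def[abs_def] .
  qed
  show "\<exists>\<tau>0>0. \<forall>\<tau>\<in>{0<..<\<tau>0}. trace_of t0 l \<tau> = ln t0"
    using ld_small[OF assms(1)] mh_pos[OF assms(1)]
    by (intro exI[of _ "l t0"]) (auto simp: trace_of_def)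
  show "filterlim (trace_of t0 l) at_top at_top"
    unfolding trace_of_def[abs_def]
    by (rule filterlim_compose[OF ln_at_top ld_tendsto[OF assms(1)]])
qed

lemma mh_of_trace_of: assumes "min_history t0 l" "t0 > 0" "t0 \<le> t"
  shows "min_history_of (trace_of t0 l) t = l t"
proof -
  have pos: "\<And>\<tau>. l_dagger t0 l \<tau> > 0" using ld_ge[OF assms(1)] assms(2) by (meson less_le_trans)
  have eq: "{\<tau>. \<tau> > 0 \<and> exp (trace_of t0 l \<tau>) > t} = {\<tau>. \<tau> > 0 \<and> l_dagger t0 l \<tau> > t}"
    using pos by (auto simp: trace_of_def)
  have lt: "l t > 0" using mh_pos[OF assms(1,3)] .
  have mem: "l t + e \<in> {\<tau>. \<tau> > 0 \<and> l_dagger t0 l \<tau> > t}" if epos: "e > 0" for e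
  proof -
    obtain d where d: "d > 0" "\<forall>s. t \<le> s \<and> s < t + d \<longrightarrow> l s < l t + e"
      using mh_rc[OF assms(1,3) epos] by blast
    have "t + d \<le> l_dagger t0 l (l t + e)"
      unfolding l_dagger_def
    proof (rule cInf_greatest)
      show "{s. t0 \<le> s \<and> l t + e < l s} \<noteq> {}" using mh_S_ne[OF assms(1)] by auto
      fix s assume s: "s \<in> {s. t0 \<le> s \<and> l t + e < l s}"
      show "t + d \<le> s"
      proof (rule ccontr)
        assume "\<not> t + d \<le> s"
        moreover have "s \<ge> t" using s mh_mono[OF assms(1), of s t] epos by (cases "s \<ge> t") auto
        ultimately show False using d s by auto
      qed
    qed
    then show ?thesis using lt epos d by auto
  qed
  have bdd: "bdd_below {\<tau>. \<tau> > 0 \<and> l_dagger t0 l \<tau> > t}" by (rule bdd_belowI[of _ 0]) auto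
  have ge: "l t \<le> Inf {\<tau>. \<tau> > 0 \<and> l_dagger t0 l \<tau> > t}"
  proof (rule cInf_greatest)
    show "{\<tau>. \<tau> > 0 \<and> l_dagger t0 l \<tau> > t} \<noteq> {}" using mem[of 1] by auto
    fix \<tau> assume "\<tau> \<in> {\<tau>. \<tau> > 0 \<and> l_dagger t0 l \<tau> > t}"
    then show "l t \<le> \<tau>" using ld_D1[OF assms(1,3), of \<tau>] by force
  qed
  have le: "Inf {\<tau>. \<tau> > 0 \<and> l_dagger t0 l \<tau> > t} \<le> l t"
  proof (rule field_le_epsilon)
    fix e :: real assume "e > 0"
    then show "Inf {\<tau>. \<tau> > 0 \<and> l_dagger t0 l \<tau> > t} \<le> l t + e"
      using mem[of e] bdd by (intro cInf_lower) auto
  qed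
  show ?thesis unfolding min_history_of_def eq using ge le by auto
qed




lemma tr_mono: "is_trace t0 A \<Longrightarrow> 0 < x \<Longrightarrow> x \<le> y \<Longrightarrow> A x \<le> A y"
  unfolding is_trace_def dist_fun_on_def mono_on_def by auto

lemma tr_base: assumes "is_trace t0 A" obtains \<tau>0 where "\<tau>0 > 0" "\<And>\<tau>. 0 < \<tau> \<Longrightarrow> \<tau> < \<tau>0 \<Longrightarrow> A \<tau> = ln t0"
  using assms unfolding is_trace_def by auto

lemma tr_ge: assumes "is_trace t0 A" "0 < \<tau>" shows "ln t0 \<le> A \<tau>"
proof -
  obtain \<tau>0 where t: "\<tau>0 > 0" "\<And>\<tau>. 0 < \<tau> \<Longrightarrow> \<tau> < \<tau>0 \<Longrightarrow> A \<tau> = ln t0" using tr_base[OF assms(1)] by blast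
  have "A (min \<tau> (\<tau>0/2)) = ln t0" using t assms(2) by auto
  moreover have "A (min \<tau> (\<tau>0/2)) \<le> A \<tau>" using tr_mono[OF assms(1)] assms(2) t(1) by auto
  ultimately show ?thesis by simp
qed

lemma tr_rc: assumes "is_trace t0 A" "0 < x" "e > 0"
  shows "\<exists>d>0. \<forall>s. x \<le> s \<and> s < x + d \<longrightarrow> A s < A x + e"
proof -
  have "continuous (at x within ({x..} \<inter> {0<..})) A"
    using assms unfolding is_trace_def dist_fun_on_def by auto
  then obtain d where d: "d > 0" "\<forall>s\<in>{x..} \<inter> {0<..}. dist s x < d \<longrightarrow> dist (A s) (A x) < e"
    using assms(3) unfolding continuous_within_eps_delta by blast
  show ?thesis
  proof (intro exI[of _ d] conjI allI impI)
    fix s assume s: "x \<le> s \<and> s < x + d"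
    then have "s \<in> {x..} \<inter> {0<..}" "dist s x < d" using assms(2) by (auto simp: dist_real_def)
    then have "dist (A s) (A x) < e" using d(2) by blast
    then show "A s < A x + e" by (simp add: dist_real_def)
  qed (use d in auto)
qed

lemma mho_ne: assumes "is_trace t0 A" shows "\<exists>\<tau>>0. exp (A \<tau>) > t"
proof -
  have "filterlim A at_top at_top" using assms unfolding is_trace_def by auto
  then have "eventually (\<lambda>\<tau>. A \<tau> > ln (max t 1)) at_top" by (simp add: filterlim_at_top_dense)
  then obtain N where N: "\<forall>\<tau>\<ge>N. A \<tau> > ln (max t 1)" by (auto simp: eventually_at_top_linorder)
  have "A (max N 1) > ln (max t 1)" using N by auto
  then have "exp (A (max N 1)) > exp (ln (max t 1))" by (rule exp_less_mono)
  moreover have "exp (ln (max t 1)) = max t 1" by simp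
  ultimately have "exp (A (max N 1)) > t" by linarith
  then show ?thesis by (intro exI[of _ "max N 1"]) auto
qed

lemma mho_M1: assumes "is_trace t0 A" "0 < \<tau>" "exp (A \<tau>) > t" shows "min_history_of A t \<le> \<tau>"
  unfolding min_history_of_def using assms by (intro cInf_lower) (auto intro: bdd_belowI[of _ 0])

lemma mho_M2: assumes "is_trace t0 A" "min_history_of A t < \<tau>" shows "0 < \<tau> \<and> exp (A \<tau>) > t"
proof -
  obtain s where s: "s > 0" "exp (A s) > t" "s < \<tau>"
    using assms(2) mho_ne[OF assms(1), of t] unfolding min_history_of_def
    by (subst (asm) cInf_less_iff) (auto intro: bdd_belowI[of _ 0])
  then show ?thesis using tr_mono[OF assms(1), of s \<tau>] by (auto simp: less_le_trans)
qed

lemma mho_pos: assumes "is_trace t0 A" "t0 > 0" "t > t0" shows "min_history_of A t > 0"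
proof -
  obtain \<tau>0 where t: "\<tau>0 > 0" "\<And>\<tau>. 0 < \<tau> \<Longrightarrow> \<tau> < \<tau>0 \<Longrightarrow> A \<tau> = ln t0" using tr_base[OF assms(1)] by blast
  have "\<tau>0 \<le> min_history_of A t"
    unfolding min_history_of_def
  proof (rule cInf_greatest)
    show "{\<tau>. 0 < \<tau> \<and> t < exp (A \<tau>)} \<noteq> {}" using mho_ne[OF assms(1)] by auto
    fix \<tau> assume "\<tau> \<in> {\<tau>. 0 < \<tau> \<and> t < exp (A \<tau>)}"
    then show "\<tau>0 \<le> \<tau>" using t assms by (cases "\<tau> < \<tau>0") auto
  qed
  then show ?thesis using t by auto
qed

definition ext_F :: "real \<Rightarrow> (real \<Rightarrow> real) \<Rightarrow> real \<Rightarrow> real" where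
  "ext_F t0 A = (\<lambda>\<tau>. if \<tau> \<le> 0 then ln t0 else A \<tau>)"

lemma extF_mono: assumes "is_trace t0 A" "x \<le> y" shows "ext_F t0 A x \<le> ext_F t0 A y"
  using assms tr_ge[OF assms(1)] tr_mono[OF assms(1)] unfolding ext_F_def by auto

lemma extF_rc: assumes "is_trace t0 A" shows "continuous (at_right a) (ext_F t0 A)"
proof -
  obtain \<tau>0 where t: "\<tau>0 > 0" "\<And>\<tau>. 0 < \<tau> \<Longrightarrow> \<tau> < \<tau>0 \<Longrightarrow> A \<tau> = ln t0" using tr_base[OF assms(1)] by blast
  show ?thesis
    unfolding continuous_within_eps_delta
  proof (intro allI impI)
    fix e :: real assume e: "e > 0"
    show "\<exists>d>0. \<forall>x'\<in>{a<..}. dist x' a < d \<longrightarrow> dist (ext_F t0 A x') (ext_F t0 A a) < e"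
    proof (cases "a > 0")
      case True
      obtain d where d: "d > 0" "\<forall>s. a \<le> s \<and> s < a + d \<longrightarrow> A s < A a + e"
        using tr_rc[OF assms True e] by blast
      show ?thesis
      proof (intro exI[of _ d] conjI ballI impI)
        fix x' assume x': "x' \<in> {a<..}" "dist x' a < d"
        then have "a \<le> x'" "x' < a + d" by (auto simp: dist_real_def)
        then have "A x' < A a + e" "A a \<le> A x'" using d tr_mono[OF assms(1) True] by auto
        then show "dist (ext_F t0 A x') (ext_F t0 A a) < e"
          using True \<open>a \<le> x'\<close> by (simp add: dist_real_def ext_F_def)
      qed (use d in auto)
    next
      case False
      show ?thesis
      proof (intro exI[of _ "\<tau>0 - a"] conjI ballI impI)
        fix x' assume x': "x' \<in> {a<..}" "dist x' a < \<tau>0 - a"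
        then have "x' < \<tau>0" by (auto simp: dist_real_def)
        then have "ext_F t0 A x' = ln t0" using t by (auto simp: ext_F_def)
        moreover have "ext_F t0 A a = ln t0" using False by (simp add: ext_F_def)
        ultimately show "dist (ext_F t0 A x') (ext_F t0 A a) < e" using e by simp
      qed (use False t in auto)
    qed
  qed
qed

lemma trace_measure_eq: "trace_measure t0 A = interval_measure (ext_F t0 A)"
  unfolding trace_measure_def ext_F_def by simp

lemma exp_tail: assumes "q > 0"
  shows "(\<integral>\<^sup>+ s. ennreal (if \<tau> \<le> s then q * exp (- q * s) else 0) \<partial>lborel) = ennreal (exp (- q * \<tau>))"
proof -
  have "((\<lambda>s. q * exp (- q * s)) has_integral q * (exp (- q * \<tau>) / q)) {\<tau>..}"
    by (intro has_integral_mult_right has_integral_exp_minus_to_infinity assms)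
  then have "integral\<^sup>N lborel (\<lambda>s. indicator {\<tau>..} s * (q * exp (- q * s))) = q * (exp (- q * \<tau>) / q)"
    by (intro nn_integral_has_integral_lebesgue) (use assms in auto)
  moreover have "(\<lambda>s. ennreal (if \<tau> \<le> s then q * exp (- q * s) else 0)) = (\<lambda>s. indicator {\<tau>..} s * (q * exp (- q * s)))"
    by (auto simp: indicator_def)
  ultimately show ?thesis using assms by simp
qed




lemma laplace_formula:
  assumes tr: "is_trace t0 A" and q: "q > 0"
  shows "laplace_trace t0 A q = (\<integral>\<^sup>+ s. ennreal (indicator {0<..} s * (q * exp (- q * s) * (A s - ln t0))) \<partial>lborel)"
proof -
  let ?M = "interval_measure (ext_F t0 A)"
  have sf: "sigma_finite_measure ?M"
    by (rule sigma_finite_interval_measure) (auto intro: extF_mono[OF tr] extF_rc[OF tr])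
  interpret P: pair_sigma_finite ?M lborel
    by (intro pair_sigma_finite.intro sf) (rule lborel.sigma_finite_measure_axioms)
  let ?f = "\<lambda>\<tau> s. ennreal (if 0 < \<tau> \<and> \<tau> \<le> s then q * exp (- q * s) else 0)"
  have meas: "case_prod ?f \<in> borel_measurable (?M \<Otimes>\<^sub>M lborel)"
    by measurable
  have "laplace_trace t0 A q = (\<integral>\<^sup>+ \<tau>. ennreal (exp (- q * \<tau>)) * indicator {0<..} \<tau> \<partial>?M)"
    unfolding laplace_trace_def trace_measure_eq ..
  also have "\<dots> = (\<integral>\<^sup>+ \<tau>. (\<integral>\<^sup>+ s. ?f \<tau> s \<partial>lborel) \<partial>?M)"
  proof (rule nn_integral_cong)
    fix \<tau> :: real
    show "ennreal (exp (- q * \<tau>)) * indicator {0<..} \<tau> = (\<integral>\<^sup>+ s. ?f \<tau> s \<partial>lborel)"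
    proof (cases "\<tau> > 0")
      case True
      then show ?thesis using exp_tail[OF q, of \<tau>] by simp
    next
      case False
      then show ?thesis by simp
    qed
  qed
  also have "\<dots> = (\<integral>\<^sup>+ s. (\<integral>\<^sup>+ \<tau>. ?f \<tau> s \<partial>?M) \<partial>lborel)"
    using P.Fubini'[OF meas] by simp
  also have "\<dots> = (\<integral>\<^sup>+ s. ennreal (indicator {0<..} s * (q * exp (- q * s) * (A s - ln t0))) \<partial>lborel)"
  proof (rule nn_integral_cong)
    fix s :: real
    show "(\<integral>\<^sup>+ \<tau>. ?f \<tau> s \<partial>?M) = ennreal (indicator {0<..} s * (q * exp (- q * s) * (A s - ln t0)))"
    proof (cases "s > 0")
      case True
      have "(\<integral>\<^sup>+ \<tau>. ?f \<tau> s \<partial>?M) = (\<integral>\<^sup>+ \<tau>. ennreal (q * exp (- q * s)) * indicator {0<..s} \<tau> \<partial>?M)"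
        by (intro nn_integral_cong) (auto simp: indicator_def)
      also have "\<dots> = ennreal (q * exp (- q * s)) * emeasure ?M {0<..s}"
        by (rule nn_integral_cmult_indicator) simp
      also have "emeasure ?M {0<..s} = ennreal (ext_F t0 A s - ext_F t0 A 0)"
        using True by (intro emeasure_interval_measure_Ioc) (auto intro: extF_mono[OF tr] extF_rc[OF tr])
      also have "ext_F t0 A s - ext_F t0 A 0 = A s - ln t0" using True by (simp add: ext_F_def)
      finally show ?thesis using True q tr_ge[OF tr True] by (simp add: ennreal_mult[symmetric])
    next
      case False
      then have "\<And>\<tau>. ?f \<tau> s = 0" by auto
      then show ?thesis using False by simp
    qed
  qed
  finally show ?thesis .
qed




lemma tr_meas: assumes "is_trace t0 A"
  shows "(\<lambda>s. indicator {0<..} s * (A s - ln t0)) \<in> borel_measurable borel"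
proof -
  have "mono (ext_F t0 A)" using extF_mono[OF assms] by (auto simp: mono_def)
  then have m: "ext_F t0 A \<in> borel_measurable borel" by (rule borel_measurable_mono)
  have "(\<lambda>s. indicator {0<..} s * (A s - ln t0)) = (\<lambda>s. indicator {0<..} s * (ext_F t0 A s - ln t0))"
    by (auto simp: indicator_def ext_F_def)
  also have "\<dots> \<in> borel_measurable borel" using m by measurable
  finally show ?thesis .
qed

lemma tr_meas2: assumes "is_trace t0 A" "g \<in> borel_measurable borel"
  shows "(\<lambda>s. indicator {0<..} s * (g s * (A s - ln t0))) \<in> borel_measurable borel"
proof -
  have "(\<lambda>s. indicator {0<..} s * (g s * (A s - ln t0))) = (\<lambda>s. g s * (indicator {0<..} s * (A s - ln t0)))"
    by (auto simp: indicator_def)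
  also have "\<dots> \<in> borel_measurable borel" using tr_meas[OF assms(1)] assms(2) by measurable
  finally show ?thesis .
qed

lemma tr_bound: assumes tr: "is_trace t0 A" and q: "q > 0" and \<tau>: "\<tau> > 0"
  shows "ennreal ((A \<tau> - ln t0) * exp (- q * \<tau>)) \<le> laplace_trace t0 A q"
proof -
  have "ennreal ((A \<tau> - ln t0) * exp (- q * \<tau>)) = ennreal (A \<tau> - ln t0) * ennreal (exp (- q * \<tau>))"
    using tr_ge[OF tr \<tau>] by (simp add: ennreal_mult)
  also have "\<dots> = ennreal (A \<tau> - ln t0) * (\<integral>\<^sup>+ s. ennreal (if \<tau> \<le> s then q * exp (- q * s) else 0) \<partial>lborel)"
    using exp_tail[OF q] by simp
  also have "\<dots> = (\<integral>\<^sup>+ s. ennreal (A \<tau> - ln t0) * ennreal (if \<tau> \<le> s then q * exp (- q * s) else 0) \<partial>lborel)"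
    by (rule nn_integral_cmult[symmetric]) measurable
  also have "\<dots> \<le> (\<integral>\<^sup>+ s. ennreal (indicator {0<..} s * (q * exp (- q * s) * (A s - ln t0))) \<partial>lborel)"
  proof (rule nn_integral_mono)
    fix s :: real
    show "ennreal (A \<tau> - ln t0) * ennreal (if \<tau> \<le> s then q * exp (- q * s) else 0)
          \<le> ennreal (indicator {0<..} s * (q * exp (- q * s) * (A s - ln t0)))"
    proof (cases "\<tau> \<le> s")
      case True
      then have "A \<tau> \<le> A s" using tr_mono[OF tr \<tau>] by auto
      then have "(A \<tau> - ln t0) * (q * exp (- q * s)) \<le> indicator {0<..} s * (q * exp (- q * s) * (A s - ln t0))"
        using True \<tau> q by (auto simp: indicator_def algebra_simps intro!: mult_left_mono)
      then show ?thesis using True tr_ge[OF tr \<tau>] q by (simp add: ennreal_mult[symmetric] ennreal_leI)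
    qed simp
  qed
  also have "\<dots> = laplace_trace t0 A q" using laplace_formula[OF tr q] by simp
  finally show ?thesis .
qed

lemma exp_integrable: fixes K a :: real assumes "a > 0"
  shows "integrable lborel (\<lambda>s. indicator {0..} s * (K * exp (- a * s)))"
proof -
  have "((\<lambda>s. \<bar>K\<bar> * exp (- a * s)) has_integral \<bar>K\<bar> * (exp (- a * 0) / a)) {0..}"
    by (intro has_integral_mult_right has_integral_exp_minus_to_infinity assms)
  then have e: "integral\<^sup>N lborel (\<lambda>s. indicator {0..} s * (\<bar>K\<bar> * exp (- a * s))) = \<bar>K\<bar> * (exp (- a * 0) / a)"
    by (intro nn_integral_has_integral_lebesgue) auto
  have "integrable lborel (\<lambda>s. indicator {0..} s * (\<bar>K\<bar> * exp (- a * s)))"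
    by (rule integrableI_nonneg) (use e in auto)
  then show ?thesis
    by (rule Bochner_Integration.integrable_bound) (auto simp: indicator_def abs_mult)
qed

lemma tr_integrand_nonneg: assumes "is_trace t0 A" "q > 0"
  shows "0 \<le> indicator {0<..} s * (q * exp (- q * s) * (A s - ln t0))"
  using tr_ge[OF assms(1), of s] assms(2) by (auto simp: indicator_def)

lemma fwd_core:
  assumes t0: "t0 > 0" and c: "c \<ge> 0" and trs: "\<And>n. is_trace t0 (As n)" and tr: "is_trace t0 A"
    and sup: "\<forall>q>c. (SUP n. laplace_trace t0 (As n) q) < \<infinity>"
    and pw: "\<And>\<tau>. \<tau> > 0 \<Longrightarrow> isCont A \<tau> \<Longrightarrow> (\<lambda>n. As n \<tau>) \<longlonglongrightarrow> A \<tau>"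
    and q: "q > c"
  shows "(\<lambda>n. laplace_trace t0 (As n) q) \<longlonglongrightarrow> laplace_trace t0 A q"
proof -
  define q' where "q' = (q + c) / 2"
  have q': "q' > c" "q' > 0" "q' < q" "q > 0" using q c by (auto simp: q'_def)
  define S where "S = (SUP n. laplace_trace t0 (As n) q')"
  have Sfin: "S < \<infinity>" using sup q' by (auto simp: S_def)
  define M where "M = enn2real S"
  have SM: "S = ennreal M" using Sfin by (simp add: M_def)
  have M0: "M \<ge> 0" by (simp add: M_def)
  have bnd: "As n \<tau> - ln t0 \<le> M * exp (q' * \<tau>)" if "\<tau> > 0" for n \<tau>
  proof -
    have "ennreal ((As n \<tau> - ln t0) * exp (- q' * \<tau>)) \<le> laplace_trace t0 (As n) q'"
      by (rule tr_bound[OF trs q'(2) that])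
    also have "\<dots> \<le> S" unfolding S_def by (rule SUP_upper) auto
    finally have "(As n \<tau> - ln t0) * exp (- q' * \<tau>) \<le> M" using SM M0 by (simp add: ennreal_le_iff)
    then have "(As n \<tau> - ln t0) * exp (- q' * \<tau>) * exp (q' * \<tau>) \<le> M * exp (q' * \<tau>)"
      by (intro mult_right_mono) auto
    then show ?thesis by (simp add: mult.assoc exp_add[symmetric])
  qed
  define sn where "sn n s = indicator {0<..} s * (q * exp (- q * s) * (As n s - ln t0))" for n s
  define f where "f s = indicator {0<..} s * (q * exp (- q * s) * (A s - ln t0))" for s
  define w where "w s = indicator {0..} s * (q * M * exp (- (q - q') * s))" for s
  have wint: "integrable lborel w" unfolding w_def using q' by (intro exp_integrable) auto
  have snm: "sn n \<in> borel_measurable lborel" for n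
    unfolding sn_def[abs_def] measurable_lborel2 by (rule tr_meas2[OF trs]) measurable
  have fm: "f \<in> borel_measurable lborel"
    unfolding f_def[abs_def] measurable_lborel2 by (rule tr_meas2[OF tr]) measurable
  have bound: "norm (sn n s) \<le> w s" for n s
  proof (cases "s > 0")
    case True
    have g: "0 \<le> As n s - ln t0" using tr_ge[OF trs True] by simp
    have "q * exp (- q * s) * (As n s - ln t0) \<le> q * exp (- q * s) * (M * exp (q' * s))"
      using bnd[OF True, of n] q' by (intro mult_left_mono) auto
    also have "\<dots> = q * M * (exp (- q * s) * exp (q' * s))" by simp
    also have "exp (- q * s) * exp (q' * s) = exp (- (q - q') * s)" by (simp add: exp_add[symmetric] algebra_simps)
    finally show ?thesis using True g q' by (simp add: sn_def w_def)
  qed (use q' M0 in \<open>auto simp: sn_def w_def indicator_def\<close>)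
  define D where "D = {s\<in>{0<..}. \<not> isCont A s}"
  have "mono_on {0<..} A" using tr unfolding is_trace_def dist_fun_on_def by auto
  then have "countable D" unfolding D_def by (intro mono_on_ctble_discont_open) auto
  then have Dnull: "D \<in> null_sets lborel" by (rule countable_imp_null_set_lborel)
  have lim: "AE s in lborel. (\<lambda>n. sn n s) \<longlonglongrightarrow> f s"
  proof (rule AE_I'[OF Dnull])
    show "{s \<in> space lborel. \<not> (\<lambda>n. sn n s) \<longlonglongrightarrow> f s} \<subseteq> D"
    proof (safe)
      fix s assume ns: "\<not> (\<lambda>n. sn n s) \<longlonglongrightarrow> f s"
      show "s \<in> D"
      proof (rule ccontr)
        assume "s \<notin> D"
        show False
        proof (cases "s > 0")
          case True
          with \<open>s \<notin> D\<close> have "isCont A s" by (auto simp: D_def)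
          then have "(\<lambda>n. As n s) \<longlonglongrightarrow> A s" using pw True by auto
          then have "(\<lambda>n. sn n s) \<longlonglongrightarrow> f s" unfolding sn_def f_def by (intro tendsto_intros)
          then show False using ns by simp
        next
          case False
          then show False using ns by (simp add: sn_def f_def)
        qed
      qed
    qed
  qed
  have conv: "(\<lambda>n. integral\<^sup>L lborel (sn n)) \<longlonglongrightarrow> integral\<^sup>L lborel f"
    by (rule integral_dominated_convergence[OF fm snm wint lim]) (use bound in auto)
  have fint: "integrable lborel f"
    by (rule integrable_dominated_convergence[OF fm snm wint lim]) (use bound in auto)
  have snint: "integrable lborel (sn n)" for n
    by (rule integrable_dominated_convergence2[OF fm snm wint lim]) (use bound in auto)
  have eqn: "laplace_trace t0 (As n) q = ennreal (integral\<^sup>L lborel (sn n))" for n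
    unfolding laplace_formula[OF trs q'(4)] sn_def[symmetric]
    by (rule nn_integral_eq_integral[OF snint]) (intro AE_I2, unfold sn_def, rule tr_integrand_nonneg[OF trs q'(4)])
  have eq: "laplace_trace t0 A q = ennreal (integral\<^sup>L lborel f)"
    unfolding laplace_formula[OF tr q'(4)] f_def[symmetric]
    by (rule nn_integral_eq_integral[OF fint]) (intro AE_I2, unfold f_def, rule tr_integrand_nonneg[OF tr q'(4)])
  show ?thesis unfolding eqn eq by (rule tendsto_ennrealI[OF conv])
qed




definition Gf :: "real \<Rightarrow> (real \<Rightarrow> real) \<Rightarrow> real \<Rightarrow> real" where
  "Gf t0 A s = indicator {0<..} s * (A s - ln t0)"

lemma Gf_nonneg: "is_trace t0 A \<Longrightarrow> 0 \<le> Gf t0 A s"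
  using tr_ge[of t0 A s] by (auto simp: Gf_def indicator_def)

lemma Gf_meas: "is_trace t0 A \<Longrightarrow> Gf t0 A \<in> borel_measurable borel"
  unfolding Gf_def[abs_def] by (rule tr_meas)

lemma Gf_mono: "is_trace t0 A \<Longrightarrow> 0 < s \<Longrightarrow> s \<le> s' \<Longrightarrow> Gf t0 A s \<le> Gf t0 A s'"
  using tr_mono[of t0 A s s'] by (auto simp: Gf_def)

lemma Gf_pos: "0 < s \<Longrightarrow> Gf t0 A s = A s - ln t0"
  by (simp add: Gf_def)

lemma lap_real:
  assumes tr: "is_trace t0 A" and q: "q > 0" and fin: "laplace_trace t0 A q < \<infinity>"
  shows "integrable lborel (\<lambda>s. exp (- q * s) * Gf t0 A s)"
    and "laplace_trace t0 A q = ennreal (q * (\<integral>s. exp (- q * s) * Gf t0 A s \<partial>lborel))"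
proof -
  have eqf: "\<And>s. indicator {0<..} s * (q * exp (- q * s) * (A s - ln t0)) = q * (exp (- q * s) * Gf t0 A s)"
    by (auto simp: Gf_def)
  have L: "laplace_trace t0 A q = (\<integral>\<^sup>+ s. ennreal (q * (exp (- q * s) * Gf t0 A s)) \<partial>lborel)"
    unfolding laplace_formula[OF tr q] by (simp only: eqf)
  have m: "(\<lambda>s. exp (- q * s) * Gf t0 A s) \<in> borel_measurable lborel"
    using Gf_meas[OF tr] by simp
  have nn: "\<And>s. 0 \<le> q * (exp (- q * s) * Gf t0 A s)" using Gf_nonneg[OF tr] q by simp
  have i1: "integrable lborel (\<lambda>s. q * (exp (- q * s) * Gf t0 A s))"
    by (rule integrableI_nonneg) (use m nn fin L in auto)
  then have "integrable lborel (\<lambda>s. (1/q) * (q * (exp (- q * s) * Gf t0 A s)))"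
    by (rule integrable_mult_right)
  then show i2: "integrable lborel (\<lambda>s. exp (- q * s) * Gf t0 A s)"
    using q by simp
  have "laplace_trace t0 A q = ennreal (\<integral>s. q * (exp (- q * s) * Gf t0 A s) \<partial>lborel)"
    unfolding L by (rule nn_integral_eq_integral[OF i1]) (use nn in auto)
  then show "laplace_trace t0 A q = ennreal (q * (\<integral>s. exp (- q * s) * Gf t0 A s \<partial>lborel))"
    by simp
qed

lemma lap_limit_fin:
  assumes "(\<lambda>n. X n) \<longlonglongrightarrow> (L :: ennreal)" "(SUP n. X n) < \<infinity>"
  shows "L < \<infinity>"
proof -
  have "L \<le> (SUP n. X n)"
    by (rule LIMSEQ_le_const2[OF assms(1)]) (auto intro: SUP_upper)
  then show ?thesis using assms(2) by auto
qed

lemma real_conv: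
  assumes trs: "\<And>n. is_trace t0 (As n)" and tr: "is_trace t0 A" and q: "q > 0"
    and sup: "(SUP n. laplace_trace t0 (As n) q) < \<infinity>"
    and conv: "(\<lambda>n. laplace_trace t0 (As n) q) \<longlonglongrightarrow> laplace_trace t0 A q"
  shows "(\<lambda>n. \<integral>s. exp (- q * s) * Gf t0 (As n) s \<partial>lborel) \<longlonglongrightarrow> (\<integral>s. exp (- q * s) * Gf t0 A s \<partial>lborel)"
    and "integrable lborel (\<lambda>s. exp (- q * s) * Gf t0 A s)"
    and "\<And>n. integrable lborel (\<lambda>s. exp (- q * s) * Gf t0 (As n) s)"
proof -
  have finn: "laplace_trace t0 (As n) q < \<infinity>" for n
    using sup by (metis SUP_upper UNIV_I order.strict_trans1)
  have fin: "laplace_trace t0 A q < \<infinity>" by (rule lap_limit_fin[OF conv sup])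
  show "integrable lborel (\<lambda>s. exp (- q * s) * Gf t0 A s)" using lap_real(1)[OF tr q fin] .
  show "\<And>n. integrable lborel (\<lambda>s. exp (- q * s) * Gf t0 (As n) s)" using lap_real(1)[OF trs q finn] .
  define I where "I n = (\<integral>s. exp (- q * s) * Gf t0 (As n) s \<partial>lborel)" for n
  define J where "J = (\<integral>s. exp (- q * s) * Gf t0 A s \<partial>lborel)"
  have I0: "0 \<le> I n" for n unfolding I_def by (rule Bochner_Integration.integral_nonneg) (use Gf_nonneg[OF trs] in simp)
  have J0: "0 \<le> J" unfolding J_def by (rule Bochner_Integration.integral_nonneg) (use Gf_nonneg[OF tr] in simp)
  have "(\<lambda>n. ennreal (q * I n)) \<longlonglongrightarrow> ennreal (q * J)"
    using conv lap_real(2)[OF trs q finn] lap_real(2)[OF tr q fin] by (simp add: I_def J_def)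
  then have "(\<lambda>n. enn2real (ennreal (q * I n))) \<longlonglongrightarrow> q * J"
    by (rule tendsto_enn2real) (use q J0 in simp)
  moreover have "(\<lambda>n. enn2real (ennreal (q * I n))) = (\<lambda>n. q * I n)" using I0 q by simp
  ultimately have "(\<lambda>n. q * I n) \<longlonglongrightarrow> q * J" by (simp only:)
  then have F: "(\<lambda>n. (1/q) * (q * I n)) \<longlonglongrightarrow> (1/q) * (q * J)" by (rule tendsto_mult_left)
  have E: "(\<lambda>n. (1/q) * (q * I n)) = I" "(1/q) * (q * J) = J" using q by auto
  have "I \<longlonglongrightarrow> J" using F unfolding E .
  then show "(\<lambda>n. \<integral>s. exp (- q * s) * Gf t0 (As n) s \<partial>lborel) \<longlonglongrightarrow> (\<integral>s. exp (- q * s) * Gf t0 A s \<partial>lborel)"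
    unfolding I_def[abs_def] J_def .
qed




definition Phi :: "real \<Rightarrow> (real \<Rightarrow> real) \<Rightarrow> real \<Rightarrow> (real \<Rightarrow> real) \<Rightarrow> real" where
  "Phi t0 B q0 f = (\<integral>s. exp (- q0 * s) * f (min 1 (exp (- s))) * Gf t0 B s \<partial>lborel)"

lemma cont_comp_f: assumes "continuous_on {0..1} f"
  shows "continuous_on UNIV (\<lambda>s::real. f (min 1 (exp (- s))))"
  by (rule continuous_on_compose2[OF assms]) (auto intro!: continuous_intros)

lemma phi_int:
  assumes tr: "is_trace t0 B" and i: "integrable lborel (\<lambda>s. exp (- q0 * s) * Gf t0 B s)"
    and f: "continuous_on {0..1} f"
  shows "integrable lborel (\<lambda>s. exp (- q0 * s) * f (min 1 (exp (- s))) * Gf t0 B s)"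
proof -
  have "bounded (f ` {0..1})" using compact_continuous_image[OF f] compact_imp_bounded by auto
  then obtain K where K0: "\<forall>x\<in>{0..1}. norm (f x) \<le> K" unfolding bounded_iff by auto
  then have K: "\<And>x. x \<in> {0..1} \<Longrightarrow> norm (f x) \<le> K" by blast
  have m1: "(\<lambda>s::real. f (min 1 (exp (- s)))) \<in> borel_measurable borel"
    by (rule borel_measurable_continuous_onI[OF cont_comp_f[OF f]])
  have m: "(\<lambda>s. exp (- q0 * s) * f (min 1 (exp (- s))) * Gf t0 B s) \<in> borel_measurable lborel"
    using m1 Gf_meas[OF tr] by simp
  have i2: "integrable lborel (\<lambda>s. K * (exp (- q0 * s) * Gf t0 B s))"
    by (rule integrable_mult_right[OF i])
  show ?thesis
  proof (rule Bochner_Integration.integrable_bound[OF i2 m], rule AE_I2)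
    fix s :: real
    have mm: "min 1 (exp (- s)) \<in> {0..1}" by auto
    have "norm (exp (- q0 * s) * f (min 1 (exp (- s))) * Gf t0 B s) = exp (- q0 * s) * (norm (f (min 1 (exp (- s))))) * Gf t0 B s"
      using Gf_nonneg[OF tr] by (simp add: abs_mult)
    also have "\<dots> \<le> exp (- q0 * s) * K * Gf t0 B s"
      using K[OF mm] Gf_nonneg[OF tr] by (intro mult_right_mono mult_left_mono) auto
    also have "\<dots> \<le> norm (K * (exp (- q0 * s) * Gf t0 B s))"
    proof -
      have G0: "0 \<le> Gf t0 B s" by (rule Gf_nonneg[OF tr])
      have h: "K * Gf t0 B s \<le> \<bar>K\<bar> * Gf t0 B s" using G0 by (intro mult_right_mono) auto
      have n: "norm (K * (exp (- q0 * s) * Gf t0 B s)) = exp (- q0 * s) * (\<bar>K\<bar> * Gf t0 B s)"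
        using G0 by (simp add: abs_mult)
      have "exp (- q0 * s) * (K * Gf t0 B s) \<le> exp (- q0 * s) * (\<bar>K\<bar> * Gf t0 B s)"
        by (rule mult_left_mono[OF h]) simp
      then show ?thesis unfolding n by (simp add: mult.assoc)
    qed
    finally show "norm (exp (- q0 * s) * f (min 1 (exp (- s))) * Gf t0 B s) \<le> norm (K * (exp (- q0 * s) * Gf t0 B s))" .
  qed
qed

lemma phi_poly:
  assumes tr: "is_trace t0 B" and i: "\<And>k::nat. integrable lborel (\<lambda>s. exp (- (q0 + k) * s) * Gf t0 B s)"
  shows "Phi t0 B q0 (\<lambda>x. \<Sum>i\<le>N. a i * x ^ i) = (\<Sum>i\<le>N. a i * (\<integral>s. exp (- (q0 + i) * s) * Gf t0 B s \<partial>lborel))"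
proof -
  have pw: "exp (- q0 * s) * (\<Sum>i\<le>N. a i * (min 1 (exp (- s))) ^ i) * Gf t0 B s
      = (\<Sum>i\<le>N. a i * (exp (- (q0 + i) * s) * Gf t0 B s))" for s
  proof (cases "s > 0")
    case True
    have "min 1 (exp (- s)) = exp (- s)" using True by auto
    moreover have "exp (- q0 * s) * exp (- s) ^ i = exp (- (q0 + i) * s)" for i :: nat
      by (simp add: exp_of_nat_mult[symmetric] exp_add[symmetric] algebra_simps)
    ultimately show ?thesis
      by (simp add: sum_distrib_left sum_distrib_right algebra_simps)
  next
    case False
    then show ?thesis by (simp add: Gf_def)
  qed
  have ii: "\<And>i. integrable lborel (\<lambda>s. a i * (exp (- (q0 + real i) * s) * Gf t0 B s))"
    by (rule integrable_mult_right[OF i])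
  show ?thesis unfolding Phi_def pw
    by (subst Bochner_Integration.integral_sum, rule ii) simp
qed



lemma phi_err:
  fixes \<epsilon> :: real
  assumes tr: "is_trace t0 B" and i: "integrable lborel (\<lambda>s. exp (- q0 * s) * Gf t0 B s)"
    and f: "continuous_on {0..1} f" and g: "continuous_on {0..1} g"
    and close: "\<And>x. x \<in> {0..1} \<Longrightarrow> \<bar>f x - g x\<bar> \<le> \<epsilon>"
  shows "\<bar>Phi t0 B q0 f - Phi t0 B q0 g\<bar> \<le> \<epsilon> * (\<integral>s. exp (- q0 * s) * Gf t0 B s \<partial>lborel)"
proof -
  have if1: "integrable lborel (\<lambda>s. exp (- q0 * s) * f (min 1 (exp (- s))) * Gf t0 B s)" by (rule phi_int[OF tr i f])
  have ig: "integrable lborel (\<lambda>s. exp (- q0 * s) * g (min 1 (exp (- s))) * Gf t0 B s)" by (rule phi_int[OF tr i g])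
  have E1: "Phi t0 B q0 f - Phi t0 B q0 g = (\<integral>s. exp (- q0 * s) * f (min 1 (exp (- s))) * Gf t0 B s - exp (- q0 * s) * g (min 1 (exp (- s))) * Gf t0 B s \<partial>lborel)"
    unfolding Phi_def by (rule Bochner_Integration.integral_diff[OF if1 ig, symmetric])
  have E2: "norm (\<integral>s. exp (- q0 * s) * f (min 1 (exp (- s))) * Gf t0 B s - exp (- q0 * s) * g (min 1 (exp (- s))) * Gf t0 B s \<partial>lborel) \<le> (\<integral>s. \<epsilon> * (exp (- q0 * s) * Gf t0 B s) \<partial>lborel)"
  proof (rule Bochner_Integration.integral_norm_bound_integral)
    show "integrable lborel (\<lambda>s. exp (- q0 * s) * f (min 1 (exp (- s))) * Gf t0 B s - exp (- q0 * s) * g (min 1 (exp (- s))) * Gf t0 B s)"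
      by (rule Bochner_Integration.integrable_diff[OF if1 ig])
    show "integrable lborel (\<lambda>s. \<epsilon> * (exp (- q0 * s) * Gf t0 B s))" by (rule integrable_mult_right[OF i])
    fix s :: real
    have mm: "min 1 (exp (- s)) \<in> {0..1}" by auto
    have "\<bar>exp (- q0 * s) * f (min 1 (exp (- s))) * Gf t0 B s - exp (- q0 * s) * g (min 1 (exp (- s))) * Gf t0 B s\<bar>
        = exp (- q0 * s) * \<bar>f (min 1 (exp (- s))) - g (min 1 (exp (- s)))\<bar> * Gf t0 B s"
    proof -
      have "exp (- q0 * s) * f (min 1 (exp (- s))) * Gf t0 B s - exp (- q0 * s) * g (min 1 (exp (- s))) * Gf t0 B s
          = exp (- q0 * s) * (f (min 1 (exp (- s))) - g (min 1 (exp (- s)))) * Gf t0 B s"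
        by (simp add: algebra_simps)
      then show ?thesis using Gf_nonneg[OF tr, of s] by (simp add: abs_mult)
    qed
    also have "\<dots> \<le> exp (- q0 * s) * \<epsilon> * Gf t0 B s"
      using close[OF mm] Gf_nonneg[OF tr] by (intro mult_right_mono mult_left_mono) auto
    finally show "norm (exp (- q0 * s) * f (min 1 (exp (- s))) * Gf t0 B s - exp (- q0 * s) * g (min 1 (exp (- s))) * Gf t0 B s)
        \<le> \<epsilon> * (exp (- q0 * s) * Gf t0 B s)" by (simp add: mult.commute mult.left_commute)
  qed
  have E3: "(\<integral>s. \<epsilon> * (exp (- q0 * s) * Gf t0 B s) \<partial>lborel) = \<epsilon> * (\<integral>s. exp (- q0 * s) * Gf t0 B s \<partial>lborel)" by (rule integral_mult_right_zero)
  show ?thesis using E2 unfolding E1[symmetric] E3 real_norm_def .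
qed


lemma phi_conv:
  assumes trs: "\<And>n. is_trace t0 (As n)" and tr: "is_trace t0 A" and q0: "q0 > 0"
    and ia: "\<And>n k. integrable lborel (\<lambda>s. exp (- (q0 + real k) * s) * Gf t0 (As n) s)"
    and ib: "\<And>k. integrable lborel (\<lambda>s. exp (- (q0 + real k) * s) * Gf t0 A s)"
    and cv: "\<And>k. (\<lambda>n. \<integral>s. exp (- (q0 + real k) * s) * Gf t0 (As n) s \<partial>lborel) \<longlonglongrightarrow> (\<integral>s. exp (- (q0 + real k) * s) * Gf t0 A s \<partial>lborel)"
    and f: "continuous_on {0..1} f"
  shows "(\<lambda>n. Phi t0 (As n) q0 f) \<longlonglongrightarrow> Phi t0 A q0 f"
proof -
  have ia0: "integrable lborel (\<lambda>s. exp (- q0 * s) * Gf t0 (As n) s)" for n using ia[of 0 n] by simp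
  have ib0: "integrable lborel (\<lambda>s. exp (- q0 * s) * Gf t0 A s)" using ib[of 0] by simp
  define B where "B n = (\<integral>s. exp (- q0 * s) * Gf t0 (As n) s \<partial>lborel)" for n
  define Bl where "Bl = (\<integral>s. exp (- q0 * s) * Gf t0 A s \<partial>lborel)"
  have "B \<longlonglongrightarrow> Bl" using cv[of 0] by (simp add: B_def[abs_def] Bl_def)
  then have "Bseq B" by (intro convergent_imp_Bseq convergentI)
  then obtain K where K: "K > 0" "\<And>n. norm (B n) \<le> K" by (auto elim: BseqE)
  define K' where "K' = K + \<bar>Bl\<bar>"
  have BK: "B n \<le> K'" for n using K(2)[of n] by (simp add: K'_def)
  have BlK: "Bl \<le> K'" using K by (simp add: K'_def)
  have K'0: "K' > 0" using K by (simp add: K'_def)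
  show ?thesis
  proof (rule metric_LIMSEQ_I)
    fix r :: real assume r: "r > 0"
    define \<epsilon> where "\<epsilon> = r / (4 * K')"
    have \<epsilon>: "\<epsilon> > 0" using r K'0 by (simp add: \<epsilon>_def)
    obtain g where g: "real_polynomial_function g" "\<And>x. x \<in> {0..1} \<Longrightarrow> \<bar>f x - g x\<bar> < \<epsilon>"
      using Stone_Weierstrass_real_polynomial_function[OF compact_Icc f \<epsilon>] by blast
    obtain a N where gN: "g = (\<lambda>x. \<Sum>i\<le>N. a i * x ^ i)"
      using g(1) unfolding real_polynomial_function_iff_sum by blast
    have gc: "continuous_on {0..1} g" unfolding gN by (intro continuous_intros)
    have "(\<lambda>n. Phi t0 (As n) q0 g) \<longlonglongrightarrow> Phi t0 A q0 g"
      unfolding gN phi_poly[OF trs ia] phi_poly[OF tr ib]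
      by (intro tendsto_intros cv)
    then obtain no where no: "\<And>n. n \<ge> no \<Longrightarrow> norm (Phi t0 (As n) q0 g - Phi t0 A q0 g) < r / 2"
      using LIMSEQ_D[of _ _ "r/2"] r by (metis half_gt_zero)
    show "\<exists>no. \<forall>n\<ge>no. dist (Phi t0 (As n) q0 f) (Phi t0 A q0 f) < r"
    proof (intro exI[of _ no] allI impI)
      fix n assume n: "n \<ge> no"
      have e1: "\<bar>Phi t0 (As n) q0 f - Phi t0 (As n) q0 g\<bar> \<le> \<epsilon> * B n"
        unfolding B_def by (rule phi_err[OF trs ia0 f gc]) (use g(2) in \<open>auto intro: less_imp_le\<close>)
      have e2: "\<bar>Phi t0 A q0 f - Phi t0 A q0 g\<bar> \<le> \<epsilon> * Bl"
        unfolding Bl_def by (rule phi_err[OF tr ib0 f gc]) (use g(2) in \<open>auto intro: less_imp_le\<close>)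
      have "\<epsilon> * B n \<le> \<epsilon> * K'" using BK \<epsilon> by (intro mult_left_mono) auto
      moreover have "\<epsilon> * Bl \<le> \<epsilon> * K'" using BlK \<epsilon> by (intro mult_left_mono) auto
      moreover have "\<epsilon> * K' = r / 4" using K'0 by (simp add: \<epsilon>_def)
      moreover have "\<bar>Phi t0 (As n) q0 g - Phi t0 A q0 g\<bar> < r / 2" using no[OF n] by simp
      ultimately show "dist (Phi t0 (As n) q0 f) (Phi t0 A q0 f) < r"
        using e1 e2 r unfolding dist_real_def by linarith
    qed
  qed
qed




lemma exp_neg_lt_iff: "exp (- s) < exp (- t) \<longleftrightarrow> t < (s::real)" by simp

lemma bump:
  assumes trs: "\<And>n. is_trace t0 (As n)" and tr: "is_trace t0 A" and q0: "q0 > 0"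
    and ia: "\<And>n k. integrable lborel (\<lambda>s. exp (- (q0 + real k) * s) * Gf t0 (As n) s)"
    and ib: "\<And>k. integrable lborel (\<lambda>s. exp (- (q0 + real k) * s) * Gf t0 A s)"
    and cv: "\<And>k. (\<lambda>n. \<integral>s. exp (- (q0 + real k) * s) * Gf t0 (As n) s \<partial>lborel) \<longlonglongrightarrow> (\<integral>s. exp (- (q0 + real k) * s) * Gf t0 A s \<partial>lborel)"
    and t1: "0 < \<tau>1" and t12: "\<tau>1 < \<tau>2" and e: "\<epsilon> > 0"
  shows "eventually (\<lambda>n. As n \<tau>1 < A \<tau>2 + \<epsilon> \<and> A \<tau>1 - \<epsilon> < As n \<tau>2) sequentially"
proof -
  define x1 where "x1 = exp (- \<tau>2)"
  define x2 where "x2 = exp (- \<tau>1)"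
  have x12: "0 < x1" "x1 < x2" "x2 < 1" using t1 t12 by (auto simp: x1_def x2_def)
  define xm where "xm = (x1 + x2) / 2"
  define r where "r = (x2 - x1) / 2"
  have r: "r > 0" using x12 by (simp add: r_def)
  define f where "f x = max 0 (r - \<bar>x - xm\<bar>)" for x :: real
  have fc: "continuous_on {0..1} f" unfolding f_def[abs_def] by (intro continuous_intros)
  have f0: "0 \<le> f x" for x by (simp add: f_def)
  define h where "h s = f (min 1 (exp (- s)))" for s :: real
  have h0: "0 \<le> h s" for s by (simp add: h_def f0)
  have hsupp: "\<tau>1 < s \<and> s < \<tau>2" if "h s > 0" "s > 0" for s
  proof -
    have m: "min 1 (exp (- s)) = exp (- s)" using that(2) by simp
    have "\<bar>exp (- s) - xm\<bar> < r" using that(1) unfolding h_def f_def m by (auto simp: max_def split: if_splits)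
    then have "- r < exp (- s) - xm" "exp (- s) - xm < r" by (auto simp only: abs_less_iff)
    note hh = this
    have "x1 < exp (- s)" using hh unfolding r_def xm_def by argo
    moreover have "exp (- s) < x2" using hh unfolding r_def xm_def by argo
    ultimately have "x1 < exp (- s) \<and> exp (- s) < x2" by simp
    then show ?thesis unfolding x1_def x2_def by simp
  qed
  have hle: "h s \<le> r" for s using r by (simp add: h_def f_def)
  have hc: "continuous_on UNIV h" unfolding h_def[abs_def] by (rule cont_comp_f[OF fc])
  define w where "w s = exp (- q0 * s) * h s * indicator {0<..} s" for s
  have wm: "w \<in> borel_measurable lborel" unfolding w_def[abs_def]
    using borel_measurable_continuous_onI[OF hc] by simp
  have wint: "integrable lborel w"
  proof (rule Bochner_Integration.integrable_bound[OF exp_integrable[OF q0, of r] wm], rule AE_I2)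
    fix s :: real
    show "norm (w s) \<le> norm (indicator {0..} s * (r * exp (- q0 * s)))"
      using hle[of s] h0[of s] r by (auto simp: w_def indicator_def abs_mult intro: mult_left_mono)
  qed
  define W where "W = (\<integral>s. w s \<partial>lborel)"
  define a' where "a' = - ln (xm + r/2)"
  define b' where "b' = - ln (xm - r/2)"
  have xmr1: "0 < xm - r/2" using x12 unfolding xm_def r_def by argo
  have xmr2: "xm - r/2 < xm + r/2" using x12 unfolding xm_def r_def by argo
  have xmr3: "xm + r/2 < 1" using x12 unfolding xm_def r_def by argo
  have xmr4: "x1 < xm - r/2" using x12 unfolding xm_def r_def by argo
  note xmr = xmr1 xmr2 xmr3 xmr4
  have ab: "0 < a'" "a' < b'" "b' < \<tau>2"
  proof -
    show "0 < a'" using xmr by (simp add: a'_def)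
    show "a' < b'" using xmr by (simp add: a'_def b'_def)
    have "ln x1 < ln (xm - r/2)" using xmr x12 by simp
    then show "b' < \<tau>2" by (simp add: b'_def x1_def)
  qed
  define \<kappa> where "\<kappa> = exp (- q0 * \<tau>2) * (r / 2)"
  have \<kappa>: "\<kappa> > 0" using r by (simp add: \<kappa>_def)
  have wlow: "\<kappa> * indicator {a'..b'} s \<le> w s" for s
  proof (cases "s \<in> {a'..b'}")
    case True
    then have s: "a' \<le> s" "s \<le> b'" "s > 0" using ab by auto
    have "exp (- s) \<le> exp (- a')" using s by simp
    also have "exp (- a') = xm + r/2" using xmr by (simp add: a'_def)
    finally have u: "exp (- s) \<le> xm + r/2" .
    have "xm - r/2 = exp (- b')" using xmr by (simp add: b'_def)
    also have "\<dots> \<le> exp (- s)" using s by simp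
    finally have l: "xm - r/2 \<le> exp (- s)" .
    have "min 1 (exp (- s)) = exp (- s)" using s by simp
    then have hE: "h s = max 0 (r - \<bar>exp (- s) - xm\<bar>)" by (simp add: h_def f_def)
    have "\<bar>exp (- s) - xm\<bar> \<le> r/2" unfolding abs_le_iff using u l by argo
    then have hs: "h s \<ge> r/2" unfolding hE by argo
    have es: "exp (- q0 * \<tau>2) \<le> exp (- q0 * s)" using s ab q0 by simp
    have "\<kappa> \<le> exp (- q0 * s) * h s" unfolding \<kappa>_def using hs es r by (intro mult_mono) auto
    then show ?thesis using True s by (simp add: w_def)
  next
    case False
    then show ?thesis using h0[of s] by (simp add: w_def)
  qed
  have "\<kappa> * (b' - a') = (\<integral>s. \<kappa> * indicator {a'..b'} s \<partial>lborel)"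
    using ab by simp
  also have "\<dots> \<le> W" unfolding W_def
    by (rule integral_mono) (use wint wlow ab in \<open>auto intro!: integrable_real_indicator\<close>)
  finally have W: "W > 0" using \<kappa> ab by (smt (verit) mult_pos_pos)
  have sand: "(B \<tau>1 - ln t0) * W \<le> Phi t0 B q0 f \<and> Phi t0 B q0 f \<le> (B \<tau>2 - ln t0) * W"
    if trB: "is_trace t0 B" and iB: "integrable lborel (\<lambda>s. exp (- q0 * s) * Gf t0 B s)" for B
  proof -
    have ip: "integrable lborel (\<lambda>s. exp (- q0 * s) * f (min 1 (exp (- s))) * Gf t0 B s)"
      by (rule phi_int[OF trB iB fc])
    have l: "(B \<tau>1 - ln t0) * w s \<le> exp (- q0 * s) * f (min 1 (exp (- s))) * Gf t0 B s" for s
    proof (cases "s > 0 \<and> h s > 0")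
      case True
      then have "\<tau>1 < s" using hsupp by auto
      then have "B \<tau>1 \<le> B s" using tr_mono[OF trB t1] by auto
      then have "(B \<tau>1 - ln t0) * (exp (- q0 * s) * h s) \<le> (B s - ln t0) * (exp (- q0 * s) * h s)"
        using h0[of s] by (intro mult_right_mono) auto
      then show ?thesis using True by (simp add: w_def Gf_def h_def mult_ac)
    next
      case False
      then have "w s = 0" using h0[of s] by (auto simp: w_def)
      moreover have "0 \<le> exp (- q0 * s) * f (min 1 (exp (- s))) * Gf t0 B s"
        using f0 Gf_nonneg[OF trB] by simp
      ultimately show ?thesis by simp
    qed
    have u: "exp (- q0 * s) * f (min 1 (exp (- s))) * Gf t0 B s \<le> (B \<tau>2 - ln t0) * w s" for s
    proof (cases "s > 0 \<and> h s > 0")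
      case True
      then have "s < \<tau>2" using hsupp by auto
      then have "B s \<le> B \<tau>2" using tr_mono[OF trB] True by auto
      then have "(B s - ln t0) * (exp (- q0 * s) * h s) \<le> (B \<tau>2 - ln t0) * (exp (- q0 * s) * h s)"
        using h0[of s] by (intro mult_right_mono) auto
      then show ?thesis using True by (simp add: w_def Gf_def h_def mult_ac)
    next
      case False
      then have "w s = 0" "h s = 0 \<or> s \<le> 0" using h0[of s] by (auto simp: w_def)
      then show ?thesis by (auto simp: Gf_def h_def)
    qed
    have "(B \<tau>1 - ln t0) * W = (\<integral>s. (B \<tau>1 - ln t0) * w s \<partial>lborel)" by (simp add: W_def)
    also have "\<dots> \<le> Phi t0 B q0 f" unfolding Phi_def
      by (rule integral_mono) (use wint ip l in auto)
    finally have L: "(B \<tau>1 - ln t0) * W \<le> Phi t0 B q0 f" .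
    have "Phi t0 B q0 f \<le> (\<integral>s. (B \<tau>2 - ln t0) * w s \<partial>lborel)" unfolding Phi_def
      by (rule integral_mono) (use wint ip u in auto)
    also have "\<dots> = (B \<tau>2 - ln t0) * W" by (simp add: W_def)
    finally show ?thesis using L by simp
  qed
  have ia0: "integrable lborel (\<lambda>s. exp (- q0 * s) * Gf t0 (As n) s)" for n using ia[of 0 n] by simp
  have ib0: "integrable lborel (\<lambda>s. exp (- q0 * s) * Gf t0 A s)" using ib[of 0] by simp
  have pc: "(\<lambda>n. Phi t0 (As n) q0 f) \<longlonglongrightarrow> Phi t0 A q0 f"
    by (rule phi_conv[OF trs tr q0 ia ib cv fc])
  have ev: "eventually (\<lambda>n. \<bar>Phi t0 (As n) q0 f - Phi t0 A q0 f\<bar> < \<epsilon> * W) sequentially"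
    using pc e W unfolding tendsto_iff dist_real_def by (auto intro: mult_pos_pos)
  show ?thesis
  proof (rule eventually_mono[OF ev], intro conjI)
    fix n assume d: "\<bar>Phi t0 (As n) q0 f - Phi t0 A q0 f\<bar> < \<epsilon> * W"
    note sn = sand[OF trs ia0, of n] and sa = sand[OF tr ib0]
    have "(As n \<tau>1 - ln t0) * W < (A \<tau>2 - ln t0) * W + \<epsilon> * W"
      using sn sa d unfolding abs_less_iff by argo
    then have "(As n \<tau>1 - ln t0) * W < (A \<tau>2 - ln t0 + \<epsilon>) * W" by (simp add: distrib_right)
    then show "As n \<tau>1 < A \<tau>2 + \<epsilon>" using W by (simp add: mult_less_cancel_right_pos)
    have "(A \<tau>1 - ln t0) * W - \<epsilon> * W < (As n \<tau>2 - ln t0) * W"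
      using sn sa d unfolding abs_less_iff by argo
    then have "(A \<tau>1 - ln t0 - \<epsilon>) * W < (As n \<tau>2 - ln t0) * W" by (simp add: left_diff_distrib)
    then show "A \<tau>1 - \<epsilon> < As n \<tau>2" using W by (simp add: mult_less_cancel_right_pos)
  qed
qed


lemma bwd_pointwise:
  assumes trs: "\<And>n. is_trace t0 (As n)" and tr: "is_trace t0 A" and q0: "q0 > 0"
    and ia: "\<And>n k. integrable lborel (\<lambda>s. exp (- (q0 + real k) * s) * Gf t0 (As n) s)"
    and ib: "\<And>k. integrable lborel (\<lambda>s. exp (- (q0 + real k) * s) * Gf t0 A s)"
    and cv: "\<And>k. (\<lambda>n. \<integral>s. exp (- (q0 + real k) * s) * Gf t0 (As n) s \<partial>lborel) \<longlonglongrightarrow> (\<integral>s. exp (- (q0 + real k) * s) * Gf t0 A s \<partial>lborel)"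
    and \<tau>: "\<tau> > 0" and ct: "isCont A \<tau>"
  shows "(\<lambda>n. As n \<tau>) \<longlonglongrightarrow> A \<tau>"
proof -
  have cont: "\<exists>d>0. \<forall>x. x \<noteq> \<tau> \<and> \<bar>x - \<tau>\<bar> < d \<longrightarrow> \<bar>A x - A \<tau>\<bar> < e" if "e > 0" for e
    using ct that unfolding isCont_def LIM_eq by simp
  show ?thesis
  proof (rule order_tendstoI)
    fix a assume a: "a < A \<tau>"
    define e where "e = (A \<tau> - a) / 3"
    have e: "e > 0" using a by (simp add: e_def)
    obtain d where d: "d > 0" "\<And>x. x \<noteq> \<tau> \<and> \<bar>x - \<tau>\<bar> < d \<Longrightarrow> \<bar>A x - A \<tau>\<bar> < e"
      using cont[OF e] by blast
    define t1 where "t1 = \<tau> - min d \<tau> / 2"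
    have t1: "0 < t1" "t1 < \<tau>" "t1 \<noteq> \<tau>" "\<bar>t1 - \<tau>\<bar> < d" using d \<tau> by (auto simp: t1_def)
    have At1: "\<bar>A t1 - A \<tau>\<bar> < e" using d(2) t1 by blast
    have ev: "eventually (\<lambda>n. As n t1 < A \<tau> + e \<and> A t1 - e < As n \<tau>) sequentially"
      by (rule bump[OF trs tr q0 ia ib cv t1(1) t1(2) e])
    show "eventually (\<lambda>n. a < As n \<tau>) sequentially"
    proof (rule eventually_mono[OF ev])
      fix n assume "As n t1 < A \<tau> + e \<and> A t1 - e < As n \<tau>"
      then show "a < As n \<tau>" using At1 unfolding e_def abs_less_iff by argo
    qed
  next
    fix b assume b: "A \<tau> < b"
    define e where "e = (b - A \<tau>) / 3"
    have e: "e > 0" using b by (simp add: e_def)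
    obtain d where d: "d > 0" "\<And>x. x \<noteq> \<tau> \<and> \<bar>x - \<tau>\<bar> < d \<Longrightarrow> \<bar>A x - A \<tau>\<bar> < e"
      using cont[OF e] by blast
    define t2 where "t2 = \<tau> + d / 2"
    have t2: "\<tau> < t2" "t2 \<noteq> \<tau>" "\<bar>t2 - \<tau>\<bar> < d" using d \<tau> by (auto simp: t2_def)
    have At2: "\<bar>A t2 - A \<tau>\<bar> < e" using d(2) t2 by blast
    have ev: "eventually (\<lambda>n. As n \<tau> < A t2 + e \<and> A \<tau> - e < As n t2) sequentially"
      by (rule bump[OF trs tr q0 ia ib cv \<tau> t2(1) e])
    show "eventually (\<lambda>n. As n \<tau> < b) sequentially"
    proof (rule eventually_mono[OF ev])
      fix n assume "As n \<tau> < A t2 + e \<and> A \<tau> - e < As n t2"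
      then show "As n \<tau> < b" using At2 unfolding e_def abs_less_iff by argo
    qed
  qed
qed




lemma exists_cont_point:
  fixes f :: "real \<Rightarrow> real"
  assumes "mono_on S f" "open S" "{a<..<b} \<subseteq> S" "a < b"
  shows "\<exists>x. a < x \<and> x < b \<and> isCont f x"
proof -
  have c: "countable {x\<in>S. \<not> isCont f x}" by (rule mono_on_ctble_discont_open[OF assms(2,1)])
  obtain x where "x \<in> {a<..<b}" "x \<notin> {x\<in>S. \<not> isCont f x}"
    using open_minus_countable[OF c, of "{a<..<b}"] assms(4) by auto
  then show ?thesis using assms(3) by auto
qed

lemma mh_mono_open: "min_history t0 l \<Longrightarrow> mono_on {t0<..} l"
  unfolding min_history_def dist_fun_on_def by (auto intro: mono_on_subset)

lemma tr_mono_on: "is_trace t0 A \<Longrightarrow> mono_on {0<..} A"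
  unfolding is_trace_def dist_fun_on_def by auto

lemma exp_trace_of: "min_history t0 l \<Longrightarrow> t0 > 0 \<Longrightarrow> exp (trace_of t0 l \<tau>) = l_dagger t0 l \<tau>"
  using ld_ge[of t0 l \<tau>] by (simp add: trace_of_def)

lemma inverse_fwd:
  assumes t0: "t0 > 0" and mh: "min_history t0 l" and mhs: "\<And>n. min_history t0 (ls n)"
    and cl: "\<forall>t>t0. isCont l t \<longrightarrow> (\<lambda>n. ls n t) \<longlonglongrightarrow> l t"
    and \<tau>: "\<tau> > 0" and ct: "isCont (trace_of t0 l) \<tau>"
  shows "(\<lambda>n. trace_of t0 (ls n) \<tau>) \<longlonglongrightarrow> trace_of t0 l \<tau>"
proof -
  define s where "s = l_dagger t0 l \<tau>"
  have s0: "t0 \<le> s" using ld_ge[OF mh] by (simp add: s_def)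
  have "isCont (\<lambda>x. exp (trace_of t0 l x)) \<tau>" using ct by (intro continuous_intros)
  then have cD: "isCont (l_dagger t0 l) \<tau>" using exp_trace_of[OF mh t0] by simp
  have mo: "mono_on {t0<..} l" by (rule mh_mono_open[OF mh])
  have "(\<lambda>n. l_dagger t0 (ls n) \<tau>) \<longlonglongrightarrow> s"
  proof (rule order_tendstoI)
    fix b assume b: "s < b"
    obtain t where t: "s < t" "t < b" "isCont l t"
    proof -
      have "{s<..<b} \<subseteq> {t0<..}" using s0 by auto
      then show ?thesis using exists_cont_point[OF mo open_greaterThan _ b] that by blast
    qed
    have "l t > \<tau>" using ld_D2[OF mh] t by (simp add: s_def)
    moreover have "(\<lambda>n. ls n t) \<longlonglongrightarrow> l t" using cl t s0 by auto
    ultimately have "eventually (\<lambda>n. ls n t > \<tau>) sequentially" using order_tendstoD(1) by blast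
    then show "eventually (\<lambda>n. l_dagger t0 (ls n) \<tau> < b) sequentially"
    proof (rule eventually_mono)
      fix n assume "ls n t > \<tau>"
      then have "l_dagger t0 (ls n) \<tau> \<le> t" using ld_D1[OF mhs] t s0 by auto
      then show "l_dagger t0 (ls n) \<tau> < b" using t by auto
    qed
  next
    fix a assume a: "a < s"
    show "eventually (\<lambda>n. a < l_dagger t0 (ls n) \<tau>) sequentially"
    proof (cases "a < t0")
      case True
      have "a < l_dagger t0 (ls n) \<tau>" for n using ld_ge[OF mhs, of n \<tau>] True by linarith
      then show ?thesis by simp
    next
      case False
      obtain t where t: "a < t" "t < s" "isCont l t"
      proof -
        have "{a<..<s} \<subseteq> {t0<..}" using False by auto
        then show ?thesis using exists_cont_point[OF mo open_greaterThan _ a] that by blast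
      qed
      have tt0: "t > t0" using t False by auto
      obtain d where d: "d > 0" "\<And>x. x \<noteq> \<tau> \<and> \<bar>x - \<tau>\<bar> < d \<Longrightarrow> \<bar>l_dagger t0 l x - l_dagger t0 l \<tau>\<bar> < s - t"
      proof -
        have L: "\<forall>r>0. \<exists>d>0. \<forall>x. x \<noteq> \<tau> \<and> norm (x - \<tau>) < d \<longrightarrow> norm (l_dagger t0 l x - l_dagger t0 l \<tau>) < r"
          using cD unfolding isCont_def LIM_eq .
        have "s - t > 0" using t by simp
        from L[rule_format, OF this] show ?thesis using that unfolding real_norm_def s_def by blast
      qed
      define \<tau>' where "\<tau>' = \<tau> - d / 2"
      have \<tau>': "\<tau>' < \<tau>" "\<tau>' \<noteq> \<tau>" "\<bar>\<tau>' - \<tau>\<bar> < d" using d by (auto simp: \<tau>'_def)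
      have "\<bar>l_dagger t0 l \<tau>' - s\<bar> < s - t" using d(2) \<tau>' by (simp add: s_def)
      then have Dt: "l_dagger t0 l \<tau>' > t" unfolding abs_less_iff by argo
      have "\<not> l t > \<tau>'" using ld_D1[OF mh, of t \<tau>'] Dt tt0 by auto
      then have "l t < \<tau>" using \<tau>' by auto
      moreover have "(\<lambda>n. ls n t) \<longlonglongrightarrow> l t" using cl t tt0 by auto
      ultimately have "eventually (\<lambda>n. ls n t < \<tau>) sequentially" using order_tendstoD(2) by blast
      then show ?thesis
      proof (rule eventually_mono)
        fix n assume "ls n t < \<tau>"
        then have "t \<le> l_dagger t0 (ls n) \<tau>" using ld_D3[OF mhs, of t] tt0 by auto
        then show "a < l_dagger t0 (ls n) \<tau>" using t by auto
      qed
    qed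
  qed
  then have "(\<lambda>n. ln (l_dagger t0 (ls n) \<tau>)) \<longlonglongrightarrow> ln s"
    by (rule tendsto_ln) (use s0 t0 in auto)
  then show ?thesis by (simp add: trace_of_def s_def)
qed

lemma inverse_bwd:
  assumes t0: "t0 > 0" and mhs: "\<And>n. min_history t0 (ls n)" and tr: "is_trace t0 A"
    and mh: "min_history t0 l" and mho: "\<forall>t\<ge>t0. min_history_of A t = l t"
    and pw: "\<And>\<tau>. \<tau> > 0 \<Longrightarrow> isCont A \<tau> \<Longrightarrow> (\<lambda>n. trace_of t0 (ls n) \<tau>) \<longlonglongrightarrow> A \<tau>"
    and t: "t > t0" and ct: "isCont l t"
  shows "(\<lambda>n. ls n t) \<longlonglongrightarrow> l t"
proof -
  define m where "m = l t"
  have mm: "min_history_of A t = m" using mho t by (simp add: m_def)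
  have m0: "m > 0" using mho_pos[OF tr t0 t] mm by simp
  have mo: "mono_on {0<..} A" by (rule tr_mono_on[OF tr])
  have t0t: "t0 \<le> t" using t by simp
  show ?thesis unfolding m_def[symmetric]
  proof (rule order_tendstoI)
    fix b assume b: "m < b"
    obtain \<tau> where \<tau>: "m < \<tau>" "\<tau> < b" "isCont A \<tau>"
    proof -
      have "{m<..<b} \<subseteq> {0<..}" using m0 by auto
      then show ?thesis using exists_cont_point[OF mo open_greaterThan _ b] that by blast
    qed
    have \<tau>0: "\<tau> > 0" using \<tau> m0 by simp
    have "exp (A \<tau>) > t" using mho_M2[OF tr, of t \<tau>] mm \<tau> by simp
    then have "A \<tau> > ln t" using t t0 by (metis exp_less_cancel_iff exp_ln less_trans)
    moreover have "(\<lambda>n. trace_of t0 (ls n) \<tau>) \<longlonglongrightarrow> A \<tau>" using pw \<tau>0 \<tau> by auto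
    ultimately have "eventually (\<lambda>n. trace_of t0 (ls n) \<tau> > ln t) sequentially" using order_tendstoD(1) by blast
    then show "eventually (\<lambda>n. ls n t < b) sequentially"
    proof (rule eventually_mono)
      fix n assume "trace_of t0 (ls n) \<tau> > ln t"
      then have "exp (trace_of t0 (ls n) \<tau>) > exp (ln t)" by (rule exp_less_mono)
      then have "l_dagger t0 (ls n) \<tau> > t" using exp_trace_of[OF mhs t0] t t0 by simp
      then have "\<not> ls n t > \<tau>" using ld_D1[OF mhs t0t] by force
      then show "ls n t < b" using \<tau> by auto
    qed
  next
    fix a assume a: "a < m"
    show "eventually (\<lambda>n. a < ls n t) sequentially"
    proof (cases "a \<le> 0")
      case True
      have "a < ls n t" for n using mh_pos[OF mhs t0t, of n] True by linarith
      then show ?thesis by simp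
    next
      case False
      obtain \<tau> where \<tau>: "a < \<tau>" "\<tau> < m" "isCont A \<tau>"
      proof -
        have "{a<..<m} \<subseteq> {0<..}" using False by auto
        then show ?thesis using exists_cont_point[OF mo open_greaterThan _ a] that by blast
      qed
      have \<tau>0: "\<tau> > 0" using \<tau> False by simp
      obtain d where d: "d > 0" "\<And>x. x \<noteq> t \<and> \<bar>x - t\<bar> < d \<Longrightarrow> \<bar>l x - l t\<bar> < m - \<tau>"
      proof -
        have L: "\<forall>r>0. \<exists>d>0. \<forall>x. x \<noteq> t \<and> norm (x - t) < d \<longrightarrow> norm (l x - l t) < r"
          using ct unfolding isCont_def LIM_eq .
        have "m - \<tau> > 0" using \<tau> by simp
        from L[rule_format, OF this] show ?thesis using that unfolding real_norm_def m_def by blast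
      qed
      define \<mu> where "\<mu> = min d (t - t0)"
      have \<mu>: "0 < \<mu>" "\<mu> \<le> d" "\<mu> \<le> t - t0" using d t by (auto simp: \<mu>_def)
      define t' where "t' = t - \<mu> / 2"
      have t'1: "t0 < t'" using \<mu> unfolding t'_def by argo
      have t'2: "t' < t" using \<mu> unfolding t'_def by argo
      have t'3: "\<bar>t' - t\<bar> < d" using \<mu> unfolding t'_def abs_less_iff by argo
      have t': "t0 < t'" "t' < t" "t' \<noteq> t" "\<bar>t' - t\<bar> < d" using t'1 t'2 t'3 by auto
      have "\<bar>l t' - m\<bar> < m - \<tau>" using d(2) t' by (simp add: m_def)
      then have lt': "l t' > \<tau>" unfolding abs_less_iff by argo
      have "min_history_of A t' = l t'" using mho t' by simp
      then have "\<not> exp (A \<tau>) > t'" using mho_M1[OF tr \<tau>0, of t'] lt' by auto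
      then have "exp (A \<tau>) < t" using t' by auto
      then have "A \<tau> < ln t" using t t0 by (metis exp_less_cancel_iff exp_ln less_trans)
      moreover have "(\<lambda>n. trace_of t0 (ls n) \<tau>) \<longlonglongrightarrow> A \<tau>" using pw \<tau>0 \<tau> by auto
      ultimately have "eventually (\<lambda>n. trace_of t0 (ls n) \<tau> < ln t) sequentially" using order_tendstoD(2) by blast
      then show ?thesis
      proof (rule eventually_mono)
        fix n assume "trace_of t0 (ls n) \<tau> < ln t"
        then have "exp (trace_of t0 (ls n) \<tau>) < exp (ln t)" by (rule exp_less_mono)
        then have "l_dagger t0 (ls n) \<tau> < t" using exp_trace_of[OF mhs t0] t t0 by simp
        then have "ls n t > \<tau>" by (rule ld_D2[OF mhs])
        then show "a < ls n t" using \<tau> by auto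
      qed
    qed
  qed
qed


theorem theorem3p4:
  fixes t0 c :: real and ls :: "nat \<Rightarrow> real \<Rightarrow> real"
  assumes "t0 > 0" and "c \<ge> 0"
    and "\<forall>n. min_history t0 (ls n)"
    and "\<forall>q>c. (SUP n. laplace_trace t0 (trace_of t0 (ls n)) q) < \<infinity>"
  shows "\<forall>l. min_history t0 l \<longrightarrow>
           ((\<forall>t>t0. isCont l t \<longrightarrow> (\<lambda>n. ls n t) \<longlonglongrightarrow> l t) \<longleftrightarrow>
            (\<exists>A. is_trace t0 A \<and> (\<forall>t\<ge>t0. min_history_of A t = l t) \<and>
                 (\<forall>q>c. (\<lambda>n. laplace_trace t0 (trace_of t0 (ls n)) q)
                          \<longlonglongrightarrow> laplace_trace t0 A q)))"
proof (intro allI impI)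
  fix l assume mh: "min_history t0 l"
  have t0: "t0 > 0" and c: "c \<ge> 0" using assms by auto
  have mhs: "\<And>n. min_history t0 (ls n)" using assms(3) by auto
  have sup: "\<forall>q>c. (SUP n. laplace_trace t0 (trace_of t0 (ls n)) q) < \<infinity>" using assms(4) .
  have trs: "\<And>n. is_trace t0 (trace_of t0 (ls n))" by (rule trace_of_is_trace[OF mhs t0])
  show "(\<forall>t>t0. isCont l t \<longrightarrow> (\<lambda>n. ls n t) \<longlonglongrightarrow> l t) \<longleftrightarrow>
            (\<exists>A. is_trace t0 A \<and> (\<forall>t\<ge>t0. min_history_of A t = l t) \<and>
                 (\<forall>q>c. (\<lambda>n. laplace_trace t0 (trace_of t0 (ls n)) q)
                          \<longlonglongrightarrow> laplace_trace t0 A q))"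
  proof
    assume cl: "\<forall>t>t0. isCont l t \<longrightarrow> (\<lambda>n. ls n t) \<longlonglongrightarrow> l t"
    have tr: "is_trace t0 (trace_of t0 l)" by (rule trace_of_is_trace[OF mh t0])
    have pw: "\<And>\<tau>. \<tau> > 0 \<Longrightarrow> isCont (trace_of t0 l) \<tau> \<Longrightarrow> (\<lambda>n. trace_of t0 (ls n) \<tau>) \<longlonglongrightarrow> trace_of t0 l \<tau>"
      by (rule inverse_fwd[OF t0 mh mhs cl])
    show "\<exists>A. is_trace t0 A \<and> (\<forall>t\<ge>t0. min_history_of A t = l t) \<and>
                 (\<forall>q>c. (\<lambda>n. laplace_trace t0 (trace_of t0 (ls n)) q)
                          \<longlonglongrightarrow> laplace_trace t0 A q)"
    proof (intro exI[of _ "trace_of t0 l"] conjI allI impI)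
      show "is_trace t0 (trace_of t0 l)" by (rule tr)
      fix t :: real assume "t \<ge> t0"
      then show "min_history_of (trace_of t0 l) t = l t" by (rule mh_of_trace_of[OF mh t0])
    next
      fix q :: real assume q: "q > c"
      show "(\<lambda>n. laplace_trace t0 (trace_of t0 (ls n)) q) \<longlonglongrightarrow> laplace_trace t0 (trace_of t0 l) q"
        by (rule fwd_core[OF t0 c trs tr sup pw q])
    qed
  next
    assume "\<exists>A. is_trace t0 A \<and> (\<forall>t\<ge>t0. min_history_of A t = l t) \<and>
                 (\<forall>q>c. (\<lambda>n. laplace_trace t0 (trace_of t0 (ls n)) q)
                          \<longlonglongrightarrow> laplace_trace t0 A q)"
    then obtain A where tr: "is_trace t0 A" and mho: "\<forall>t\<ge>t0. min_history_of A t = l t"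
      and cv: "\<forall>q>c. (\<lambda>n. laplace_trace t0 (trace_of t0 (ls n)) q) \<longlonglongrightarrow> laplace_trace t0 A q"
      by blast
    define q0 where "q0 = c + 1"
    have q0: "q0 > 0" using c by (simp add: q0_def)
    have qk: "q0 + real k > c" "q0 + real k > 0" for k using c by (auto simp: q0_def)
    have sk: "(SUP n. laplace_trace t0 (trace_of t0 (ls n)) (q0 + real k)) < \<infinity>" for k
      using sup qk(1)[of k] by blast
    have ck: "(\<lambda>n. laplace_trace t0 (trace_of t0 (ls n)) (q0 + real k)) \<longlonglongrightarrow> laplace_trace t0 A (q0 + real k)" for k
      using cv qk(1)[of k] by blast
    note RC = real_conv[OF trs tr qk(2) sk ck]
    have pw: "\<And>\<tau>. \<tau> > 0 \<Longrightarrow> isCont A \<tau> \<Longrightarrow> (\<lambda>n. trace_of t0 (ls n) \<tau>) \<longlonglongrightarrow> A \<tau>"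
      by (rule bwd_pointwise[OF trs tr q0 RC(3) RC(2) RC(1)])
    show "\<forall>t>t0. isCont l t \<longrightarrow> (\<lambda>n. ls n t) \<longlonglongrightarrow> l t"
      using inverse_bwd[OF t0 mhs tr mh mho pw] by blast
  qed
qed



end
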